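(* Let $\mathbb{F}$ be a finite field with $n=|\mathbb{F}|$, let $d<n$ and $\delta=1-d/n\ge 3/4$, and let $0<\rho\le\delta/8$. Let $f\colon\mathbb{F}^m\to\mathbb{F}$ and let $a,h,h'\in\mathbb{F}^m$ be such that the function $g\colon\mathbb{F}^2\to\mathbb{F}$, $g(t,s)=f(a+th+sh')$, has at least $(\delta-2\rho)n^2$ nonzero values. Choose $s,s',t,t'\in\mathbb{F}$ independently and uniformly and let $y=a+sh+s'h'$ and $u=th+t'h'$. Then \[ \Pr\big[\,|\{r\in\mathbb{F}: f(y+ru)\ne0\}|\ge 2\rho n\,\big]\ge 1-\frac{4}{n}. \] *)

theory Defs
  imports "HOL-Analysis.Analysis"
begin

end

theory Submission
  imports Defs
begin

definition pt :: "'a::field \<Rightarrow> 'a\<times>'a\<times>'a\<times>'a \<Rightarrow> 'a\<times>'a" where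
  "pt r \<omega> = (case \<omega> of (s,s',t,t') \<Rightarrow> (s+r*t, s'+r*t'))"

lemma card_UNIV_4: "card (UNIV :: ('a::finite \<times> 'a) set) = CARD('a)^2"
  by (simp add: power2_eq_square)

lemma real_card_sum: "real (card {x::'b::finite. P x}) = (\<Sum>x\<in>UNIV. if P x then 1 else 0)"
  by (simp add: sum.If_cases)

lemma cnt1:
  fixes S :: "('a::{finite,field} \<times> 'a) set"
  shows "card {\<omega>. pt r \<omega> \<in> S} = card S * CARD('a)^2"
proof -
  define \<psi> :: "'a\<times>'a\<times>'a\<times>'a \<Rightarrow> ('a\<times>'a)\<times>('a\<times>'a)" where
    "\<psi> = (\<lambda>\<omega>. (pt r \<omega>, snd (snd \<omega>)))"
  define \<phi> :: "('a\<times>'a)\<times>('a\<times>'a) \<Rightarrow> 'a\<times>'a\<times>'a\<times>'a" where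
    "\<phi> = (\<lambda>((x,y),(t,t')). (x - r*t, y - r*t', t, t'))"
  have inj: "inj \<psi>"
    by (rule inj_on_inverseI[where g=\<phi>]) (auto simp: \<psi>_def \<phi>_def pt_def split: prod.splits)
  have surj: "surj \<psi>"
    by (rule surjI[where f=\<phi>]) (auto simp: \<psi>_def \<phi>_def pt_def split: prod.splits)
  have "{\<omega>. pt r \<omega> \<in> S} = \<psi> -` (S \<times> UNIV)" by (auto simp: \<psi>_def)
  then have "card {\<omega>. pt r \<omega> \<in> S} = card (S \<times> (UNIV :: ('a\<times>'a) set))"
    using card_vimage_inj[OF inj] surj by simp
  also have "\<dots> = card S * CARD('a)^2" by (simp add: card_cartesian_product power2_eq_square)
  finally show ?thesis .
qed

lemma cnt2:
  fixes S :: "('a::{finite,field} \<times> 'a) set"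
  assumes "r \<noteq> r'"
  shows "card {\<omega>. pt r \<omega> \<in> S \<and> pt r' \<omega> \<in> S} = card S ^ 2"
proof -
  define \<psi> :: "'a\<times>'a\<times>'a\<times>'a \<Rightarrow> ('a\<times>'a)\<times>('a\<times>'a)" where
    "\<psi> = (\<lambda>\<omega>. (pt r \<omega>, pt r' \<omega>))"
  define \<phi> :: "('a\<times>'a)\<times>('a\<times>'a) \<Rightarrow> 'a\<times>'a\<times>'a\<times>'a" where
    "\<phi> = (\<lambda>((x1,y1),(x2,y2)). let t = (x1 - x2)/(r - r'); t' = (y1 - y2)/(r - r') in
       (x1 - r*t, y1 - r*t', t, t'))"
  have d: "r - r' \<noteq> 0" using assms by simp
  have inj: "inj \<psi>"
    by (rule inj_on_inverseI[where g=\<phi>]) (use d in \<open>auto simp: \<psi>_def \<phi>_def pt_def Let_def field_simps split: prod.splits\<close>)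
  have aux: "x1 - r*((x1-x2)/(r-r')) + r'*((x1-x2)/(r-r')) = x2" for x1 x2
  proof -
    have e: "(r-r')*((x1-x2)/(r-r')) = x1-x2" using d by simp
    have k: "x1 - r*q + r'*q = x1 - (r-r')*q" for q
      by (simp add: algebra_simps)
    show ?thesis unfolding k[of "(x1-x2)/(r-r')"] e by simp
  qed
  have aux': "x1 - r*(x1-x2)/(r-r') + r'*(x1-x2)/(r-r') = x2" for x1 x2
    using aux[of x1 x2] by (simp only: times_divide_eq_right)
  have surj: "surj \<psi>"
    by (rule surjI[where f=\<phi>]) (auto simp: \<psi>_def \<phi>_def pt_def Let_def aux' split: prod.splits)
  have "{\<omega>. pt r \<omega> \<in> S \<and> pt r' \<omega> \<in> S} = \<psi> -` (S \<times> S)" by (auto simp: \<psi>_def)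
  then have "card {\<omega>. pt r \<omega> \<in> S \<and> pt r' \<omega> \<in> S} = card (S \<times> S)"
    using card_vimage_inj[OF inj] surj by simp
  also have "\<dots> = card S ^ 2" by (simp add: card_cartesian_product power2_eq_square)
  finally show ?thesis .
qed

lemma vec_id:
  fixes a h h' :: "'a::field ^ 'm"
  shows "(a + s *s h + s' *s h') + r *s (t *s h + t' *s h') = a + (s + r*t) *s h + (s' + r*t') *s h'"
  by (simp add: vec_eq_iff algebra_simps)

lemma sum_if_eq: "(\<Sum>r'\<in>(UNIV::'b::finite set). if r = r' then A else B) = A + (real CARD('b) - 1) * (B::real)"
proof -
  have "(\<Sum>r'\<in>(UNIV::'b set). if r = r' then A else B) = (\<Sum>r'\<in>(UNIV::'b set). B + (if r = r' then A - B else 0))"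
    by (rule sum.cong) auto
  also have "\<dots> = real CARD('b) * B + (A - B)" by (simp add: sum.distrib)
  finally show ?thesis by (simp add: algebra_simps)
qed

theorem mainTheorem5:
  fixes f :: "'a::{finite,field} ^ 'm \<Rightarrow> 'a"
    and a h h' :: "'a ^ 'm"
    and d :: nat and \<delta> \<rho> :: real
  defines "n \<equiv> CARD('a)"
  assumes "d < n"
    and "\<delta> = 1 - real d / real n"
    and "\<delta> \<ge> 3/4"
    and "0 < \<rho>" and "\<rho> \<le> \<delta> / 8"
    and "real (card {(t, s). f (a + t *s h + s *s h') \<noteq> 0}) \<ge> (\<delta> - 2*\<rho>) * (real n)^2"
  shows "real (card {(s :: 'a, s', t, t').
            real (card {r. f ((a + s *s h + s' *s h') + r *s (t *s h + t' *s h')) \<noteq> 0})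
              \<ge> 2 * \<rho> * real n}) / (real n)^4
         \<ge> 1 - 4 / real n"
proof -
  define S where "S = {p::'a\<times>'a. f (a + fst p *s h + snd p *s h') \<noteq> 0}"
  define N where "N = real n"
  define \<sigma> where "\<sigma> = real (card S)"
  define X where "X = (\<lambda>\<omega>. real (card {r. pt r \<omega> \<in> S}))"
  define ind where "ind = (\<lambda>r \<omega>. if pt r \<omega> \<in> S then 1 else (0::real))"
  have Npos: "N > 0" unfolding N_def n_def by simp
  have Sdef: "{(t, s). f (a + t *s h + s *s h') \<noteq> 0} = S" by (auto simp: S_def)
  have \<sigma>low: "\<sigma> \<ge> (\<delta> - 2*\<rho>) * N^2" using assms(7) unfolding Sdef \<sigma>_def N_def .
  have \<sigma>up: "\<sigma> \<le> N^2"
  proof -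
    have "card S \<le> card (UNIV :: ('a\<times>'a) set)" by (rule card_mono) auto
    then have "card S \<le> CARD('a) * CARD('a)" by simp
    then have "real (card S) \<le> real (CARD('a) * CARD('a))" by (simp only: of_nat_le_iff)
    then show ?thesis unfolding \<sigma>_def N_def n_def by (simp add: power2_eq_square)
  qed
  have inner: "{r. f ((a + s *s h + s' *s h') + r *s (t *s h + t' *s h')) \<noteq> 0} = {r. pt r (s,s',t,t') \<in> S}"
    for s s' t t' unfolding vec_id by (simp add: pt_def S_def)
  define T where "T = {\<omega>. X \<omega> \<ge> 2 * \<rho> * N}"
  have Tdef: "{(s :: 'a, s', t, t').
            real (card {r. f ((a + s *s h + s' *s h') + r *s (t *s h + t' *s h')) \<noteq> 0})
              \<ge> 2 * \<rho> * real n} = T"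
    unfolding T_def X_def N_def inner by auto
  have cardU: "card (UNIV :: ('a\<times>'a\<times>'a\<times>'a) set) = n^4" unfolding n_def
    by (simp add: power_def)
  have Xsum: "X \<omega> = (\<Sum>r\<in>UNIV. ind r \<omega>)" for \<omega>
    unfolding X_def ind_def by (rule real_card_sum)
  have s1: "(\<Sum>\<omega>\<in>UNIV. ind r \<omega>) = \<sigma> * N^2" for r
  proof -
    have "(\<Sum>\<omega>\<in>UNIV. ind r \<omega>) = real (card {\<omega>. pt r \<omega> \<in> S})"
      unfolding ind_def by (rule real_card_sum[symmetric])
    then show ?thesis using cnt1[of r S] by (simp add: \<sigma>_def N_def n_def)
  qed
  have sum1: "(\<Sum>\<omega>\<in>UNIV. X \<omega>) = N * (\<sigma> * N^2)"
  proof -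
    have "(\<Sum>\<omega>\<in>UNIV. X \<omega>) = (\<Sum>r\<in>UNIV. \<Sum>\<omega>\<in>UNIV. ind r \<omega>)"
      unfolding Xsum by (rule sum.swap)
    also have "\<dots> = N * (\<sigma> * N^2)" by (simp add: s1 N_def n_def)
    finally show ?thesis .
  qed
  have s2: "(\<Sum>\<omega>\<in>UNIV. ind r \<omega> * ind r' \<omega>) = (if r = r' then \<sigma> * N^2 else \<sigma>^2)" for r r'
  proof -
    have "(\<Sum>\<omega>\<in>UNIV. ind r \<omega> * ind r' \<omega>) = real (card {\<omega>. pt r \<omega> \<in> S \<and> pt r' \<omega> \<in> S})"
      unfolding ind_def by (subst real_card_sum) (rule sum.cong, auto)
    then show ?thesis using cnt1[of r S] cnt1[of r' S] cnt2[of r r' S] by (cases "r = r'") (simp_all add: \<sigma>_def N_def n_def)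
  qed
  have sum2: "(\<Sum>\<omega>\<in>UNIV. (X \<omega>)^2) = N * (\<sigma> * N^2 + (N - 1) * \<sigma>^2)"
  proof -
    have "(\<Sum>\<omega>\<in>UNIV. (X \<omega>)^2) = (\<Sum>\<omega>\<in>UNIV. \<Sum>r\<in>UNIV. \<Sum>r'\<in>UNIV. ind r \<omega> * ind r' \<omega>)"
      unfolding Xsum power2_eq_square sum_product by simp
    also have "\<dots> = (\<Sum>r\<in>UNIV. \<Sum>\<omega>\<in>UNIV. \<Sum>r'\<in>UNIV. ind r \<omega> * ind r' \<omega>)"
      by (rule sum.swap)
    also have "\<dots> = (\<Sum>r\<in>UNIV. \<Sum>r'\<in>UNIV. \<Sum>\<omega>\<in>UNIV. ind r \<omega> * ind r' \<omega>)"
      by (rule sum.cong[OF refl], rule sum.swap)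
    also have "\<dots> = (\<Sum>r\<in>(UNIV::'a set). \<sigma> * N^2 + (N - 1) * \<sigma>^2)"
      unfolding s2 sum_if_eq N_def n_def by simp
    also have "\<dots> = N * (\<sigma> * N^2 + (N - 1) * \<sigma>^2)" by (simp add: N_def n_def)
    finally show ?thesis .
  qed
  define c where "c = \<sigma> / N"
  have var: "(\<Sum>\<omega>\<in>UNIV. (X \<omega> - c)^2) = N^3 * \<sigma> - N * \<sigma>^2"
  proof -
    have "(\<Sum>\<omega>\<in>UNIV. (X \<omega> - c)^2) = (\<Sum>\<omega>\<in>UNIV. (X \<omega>)^2) - 2 * c * (\<Sum>\<omega>\<in>UNIV. X \<omega>) + N^4 * c^2"
    proof -
      have "(\<Sum>\<omega>\<in>UNIV. (X \<omega> - c)^2) = (\<Sum>\<omega>\<in>UNIV. (X \<omega>)^2 - (2 * c) * X \<omega> + c^2)"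
        by (rule sum.cong) (auto simp: power2_diff algebra_simps)
      also have "\<dots> = (\<Sum>\<omega>\<in>UNIV. (X \<omega>)^2) - (\<Sum>\<omega>\<in>UNIV. (2 * c) * X \<omega>) + (\<Sum>\<omega>\<in>(UNIV::('a\<times>'a\<times>'a\<times>'a) set). c^2)"
        by (simp add: sum.distrib sum_subtractf)
      also have "(\<Sum>\<omega>\<in>(UNIV::('a\<times>'a\<times>'a\<times>'a) set). c^2) = N^4 * c^2"
        using cardU by (simp add: N_def)
      finally show ?thesis by (simp add: sum_distrib_left)
    qed
    also have "\<dots> = N^3 * \<sigma> - N * \<sigma>^2"
      unfolding sum1 sum2 c_def using Npos by (simp add: field_simps power2_eq_square power3_eq_cube power4_eq_xxxx)
    finally show ?thesis .
  qed
  have power5_eq: "N^5 = N*N*N*N*N" by (simp add: eval_nat_numeral)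
  define B where "B = {\<omega>. X \<omega> < 2 * \<rho> * N}"
  have gap: "c - 2 * \<rho> * N \<ge> 3/8 * N"
  proof -
    have "c \<ge> (\<delta> - 2*\<rho>) * N" unfolding c_def using \<sigma>low Npos
      by (simp add: field_simps power2_eq_square)
    moreover have "\<delta> - 4*\<rho> \<ge> 3/8" using assms(4,6) by linarith
    then have "(\<delta> - 4*\<rho>) * N \<ge> 3/8 * N" using Npos by (intro mult_right_mono) auto
    ultimately show ?thesis by (simp add: algebra_simps)
  qed
  have lowB: "(X \<omega> - c)^2 \<ge> 9/64 * N^2" if "\<omega> \<in> B" for \<omega>
  proof -
    have "c - X \<omega> \<ge> 3/8 * N" using that gap unfolding B_def by simp
    moreover have "3/8 * N \<ge> 0" using Npos by simp
    ultimately have "(3/8 * N)^2 \<le> (c - X \<omega>)^2" by (rule power_mono)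
    moreover have "(3/8 * N)^2 = 9/64 * N^2" by (simp add: power_mult_distrib power_divide)
    ultimately show ?thesis by (simp add: power2_commute)
  qed
  have "real (card B) * (9/64 * N^2) \<le> (\<Sum>\<omega>\<in>B. (X \<omega> - c)^2)"
    using lowB by (rule sum_bounded_below)
  also have "\<dots> \<le> (\<Sum>\<omega>\<in>UNIV. (X \<omega> - c)^2)"
    by (rule sum_mono2) auto
  also have "\<dots> \<le> N^5 / 4"
  proof -
    have "\<sigma> * (N^2 - \<sigma>) \<le> N^4/4"
    proof -
      have "N^4/4 - \<sigma>*(N^2-\<sigma>) = (N^2 - 2*\<sigma>)^2/4"
        by (simp add: algebra_simps power2_eq_square power4_eq_xxxx)
      moreover have "(N^2 - 2*\<sigma>)^2/4 \<ge> 0" by simp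
      ultimately show ?thesis by linarith
    qed
    then have "N * (\<sigma> * (N^2 - \<sigma>)) \<le> N * (N^4/4)" using Npos by (intro mult_left_mono) auto
    then show ?thesis unfolding var by (simp add: algebra_simps power2_eq_square power3_eq_cube power4_eq_xxxx power5_eq)
  qed
  finally have Bbound: "real (card B) * (9/64 * N^2) \<le> N^5 / 4" .
  have cardB: "real (card B) \<le> 4 * N^3"
  proof -
    have "real (card B) * (9/64 * N^2) \<le> (4 * N^3) * (9/64 * N^2)"
      using Bbound Npos by (simp add: algebra_simps power2_eq_square power3_eq_cube power5_eq)
    moreover have "9/64 * N^2 > 0" using Npos by simp
    ultimately show ?thesis by (rule mult_right_le_imp_le)
  qed
  have TB: "T = UNIV - B" unfolding T_def B_def by auto
  have cardT: "real (card T) = N^4 - real (card B)"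
  proof -
    have le: "card B \<le> n^4" using card_mono[of UNIV B] cardU by simp
    have "card (UNIV - B) = card (UNIV :: ('a\<times>'a\<times>'a\<times>'a) set) - card B"
      by (rule card_Diff_subset) auto
    then show ?thesis unfolding TB cardU N_def using le by (simp add: of_nat_diff)
  qed
  have "real (card T) / N^4 \<ge> 1 - 4 / N"
  proof -
    have "real (card T) \<ge> N^4 - 4 * N^3" using cardT cardB by simp
    then have "real (card T) / N^4 \<ge> (N^4 - 4 * N^3) / N^4" using Npos
      by (intro divide_right_mono) auto
    also have "(N^4 - 4 * N^3) / N^4 = 1 - 4 / N" using Npos
      by (simp add: field_simps power4_eq_xxxx power3_eq_cube)
    finally show ?thesis .
  qed
  then show ?thesis unfolding Tdef N_def .
qed

end
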